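(* Let $n\ge 1$ be an integer, let $f\colon\{0,1\}^n\to\mathbb{R}$, $f(x)=\sum_{i=1}^n w_ix_i$, be a linear function with weights $0<w_1\le w_2\le\dots\le w_n$, and let $g\colon\{0,1\}^n\to\mathbb{R}$ be $g(x)=\sum_{i=1}^n(1+i/n)x_i$. Let $x\in\{0,1\}^n$ and let $y\in\{0,1\}^n$ be obtained from $x$ by flipping each bit independently with probability $1/n$. Define the random variable $\Delta(x):=g(x)-g(y)$ if $f(y)\le f(x)$ and $\Delta(x):=0$ otherwise. Then $$\mathrm{E}[\Delta(x)]\ge \frac{g(x)}{4\mathrm{e} n}.$$ *)

theory Defs
  imports Complex_Main
begin

(* A bit string x in {0,1}^n is represented by the set of positions i in {1..n}
   with x_i = 1. *)

definition lin_fun :: "(nat \<Rightarrow> real) \<Rightarrow> nat set \<Rightarrow> real" where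
  "lin_fun w x = (\<Sum>i\<in>x. w i)"

definition g_fun :: "nat \<Rightarrow> nat set \<Rightarrow> real" where
  "g_fun n x = (\<Sum>i\<in>x. 1 + real i / real n)"

definition delta :: "nat \<Rightarrow> (nat \<Rightarrow> real) \<Rightarrow> nat set \<Rightarrow> nat set \<Rightarrow> real" where
  "delta n w x y = (if lin_fun w y \<le> lin_fun w x then g_fun n x - g_fun n y else 0)"

(* probability that standard bit mutation (each bit flipped independently
   with prob. 1/n) turns x into y, for x, y subsets of {1..n}:
   the flipped positions are exactly the symmetric difference of x and y *)
definition mut_prob :: "nat \<Rightarrow> nat set \<Rightarrow> nat set \<Rightarrow> real" where
  "mut_prob n x y =
     (1 / real n) ^ card ((x - y) \<union> (y - x)) *
     (1 - 1 / real n) ^ (n - card ((x - y) \<union> (y - x)))"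

definition expected_delta :: "nat \<Rightarrow> (nat \<Rightarrow> real) \<Rightarrow> nat set \<Rightarrow> real" where
  "expected_delta n w x = (\<Sum>y\<in>Pow {1..n}. mut_prob n x y * delta n w x y)"

end

theory Submission
  imports Defs
begin


lemma sum_diff_sets:
  fixes f :: "nat \<Rightarrow> real"
  assumes "finite x" "finite y"
  shows "sum f y - sum f x = sum f (y - x) - sum f (x - y)"
proof -
  have "sum f y = sum f (y \<inter> x) + sum f (y - x)" using assms by (simp add: sum.Int_Diff)
  moreover have "sum f x = sum f (x \<inter> y) + sum f (x - y)" using assms by (simp add: sum.Int_Diff)
  ultimately show ?thesis by (simp add: Int_commute)
qed

lemma mut_prob_nonneg: "n \<ge> 1 \<Longrightarrow> mut_prob n x y \<ge> 0"
  unfolding mut_prob_def by simp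

lemma mut_prob_insert:
  assumes "n \<ge> 2" "x \<subseteq> {1..n}" "y \<subseteq> {1..n}" "b \<in> {1..n}" "b \<notin> x" "b \<notin> y"
  shows "mut_prob n x (insert b y) = mut_prob n x y / (real n - 1)"
proof -
  define D where "D = (x - y) \<union> (y - x)"
  have D': "(x - insert b y) \<union> (insert b y - x) = insert b D"
    using assms unfolding D_def by auto
  have bD: "b \<notin> D" using assms unfolding D_def by auto
  have fD: "finite D" using assms unfolding D_def by (auto intro: finite_subset)
  have "D \<subseteq> {1..n} - {b}" using assms bD unfolding D_def by auto
  then have "card D \<le> card ({1..n} - {b})" by (intro card_mono) auto
  also have "\<dots> = n - 1" using assms by simp
  finally have cD: "card D \<le> n - 1" .
  have cD': "card (insert b D) = Suc (card D)" using bD fD by simp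
  define c where "c = card D"
  have nc: "n - c = Suc (n - Suc c)" using cD assms unfolding c_def by linarith
  have n1: "real n - 1 > 0" using assms by simp
  have q: "(1 - 1 / real n) / (real n - 1) = 1 / real n" using assms by (simp add: field_simps)
  have "mut_prob n x (insert b y) = (1 / real n) ^ Suc c * (1 - 1 / real n) ^ (n - Suc c)"
    unfolding mut_prob_def D' cD' c_def ..
  also have "\<dots> = (1 / real n) ^ c * (1 - 1 / real n) ^ (n - Suc c) * ((1 - 1 / real n) / (real n - 1))"
    unfolding q by simp
  also have "\<dots> = (1 / real n) ^ c * (1 - 1 / real n) ^ (n - c) / (real n - 1)"
    unfolding nc by simp
  also have "\<dots> = mut_prob n x y / (real n - 1)"
    unfolding mut_prob_def D_def[symmetric] c_def ..
  finally show ?thesis .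
qed

lemma sum_lo: "(\<Sum>b\<in>{1..<a}. real b) = real (a - 1) * real a / 2"
proof (induction a)
  case 0 then show ?case by simp
next
  case (Suc a)
  show ?case
  proof (cases "a = 0")
    case True then show ?thesis by simp
  next
    case False
    have "{1..<Suc a} = insert a {1..<a}" using False by auto
    then have "(\<Sum>b\<in>{1..<Suc a}. real b) = real a + (\<Sum>b\<in>{1..<a}. real b)" by simp
    also have "\<dots> = real a + real (a - 1) * real a / 2" using Suc by simp
    also have "\<dots> = real (Suc a - 1) * real (Suc a) / 2" using False
      by (simp add: of_nat_diff field_simps)
    finally show ?thesis .
  qed
qed

lemma sum_hi: "a \<le> n \<Longrightarrow> (\<Sum>b\<in>{a<..n}. real b - real a) = real (n - a) * (real (n - a) + 1) / 2"
proof (induction n)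
  case 0 then show ?case by simp
next
  case (Suc n)
  show ?case
  proof (cases "a = Suc n")
    case True then show ?thesis by simp
  next
    case False
    then have an: "a \<le> n" using Suc by simp
    have "{a<..Suc n} = insert (Suc n) {a<..n}" using an by auto
    then have "(\<Sum>b\<in>{a<..Suc n}. real b - real a) = (real (Suc n) - real a) + (\<Sum>b\<in>{a<..n}. real b - real a)" by simp
    also have "\<dots> = (real (Suc n) - real a) + real (n - a) * (real (n - a) + 1) / 2" using Suc an by simp
    also have "\<dots> = real (Suc n - a) * (real (Suc n - a) + 1) / 2" using an
      by (simp add: of_nat_diff field_simps)
    finally show ?thesis .
  qed
qed

lemma exp_bound:
  assumes "n \<ge> 2"
  shows "(1 - 1 / real n) ^ (n - 1) \<ge> exp (-1)"
proof -
  define m where "m = n - 1"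
  have m1: "m \<ge> 1" and nm: "real n = real m + 1" using assms unfolding m_def by auto
  have "(1 + 1 / real m) ^ m \<le> exp (1 / real m) ^ m"
    by (intro power_mono) (auto simp: add.commute[of _ 1] exp_ge_add_one_self)
  also have "\<dots> = exp 1" using m1 by (simp add: exp_of_nat_mult[symmetric])
  finally have h: "(1 + 1 / real m) ^ m \<le> exp 1" .
  have pos: "(1 + 1 / real m) ^ m > 0" by (simp add: add_pos_nonneg)
  have "1 - 1 / real n = 1 / (1 + 1 / real m)" using m1 nm by (simp add: field_simps)
  then have "(1 - 1 / real n) ^ (n - 1) = 1 / (1 + 1 / real m) ^ m"
    unfolding m_def[symmetric] by (simp add: power_one_over)
  also have "1 / (1 + 1 / real m) ^ m \<ge> 1 / exp 1" using h pos by (intro divide_left_mono) auto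
  finally show ?thesis by (simp add: exp_minus field_simps)
qed



lemma inj_b:
  assumes n2: "n \<ge> 2" and xU: "x \<subseteq> {1..n}" and XU: "X \<subseteq> Pow {1..n}"
    and Z: "Z \<subseteq> {1..n} - x" and down: "\<And>y b. y \<in> X \<Longrightarrow> b \<in> Z \<Longrightarrow> b \<in> y \<Longrightarrow> y - {b} \<in> X"
    and b: "b \<in> Z"
  shows "(\<Sum>y\<in>{y\<in>X. b \<in> y}. mut_prob n x y) \<le> (\<Sum>y\<in>{y\<in>X. b \<notin> y}. mut_prob n x y) / (real n - 1)"
proof -
  define S where "S = {y\<in>X. b \<in> y}"
  have fX: "finite X" using XU by (rule finite_subset) auto
  have inj: "inj_on (\<lambda>y. y - {b}) S" unfolding S_def inj_on_def by auto
  have img: "(\<lambda>y. y - {b}) ` S \<subseteq> {y\<in>X. b \<notin> y}" using down b unfolding S_def by auto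
  have "(\<Sum>y\<in>S. mut_prob n x y) = (\<Sum>y\<in>S. mut_prob n x (y - {b}) / (real n - 1))"
  proof (rule sum.cong[OF refl])
    fix y assume y: "y \<in> S"
    then have "y = insert b (y - {b})" unfolding S_def by auto
    moreover have "mut_prob n x (insert b (y - {b})) = mut_prob n x (y - {b}) / (real n - 1)"
      using y XU Z b n2 xU unfolding S_def by (intro mut_prob_insert) auto
    ultimately show "mut_prob n x y = mut_prob n x (y - {b}) / (real n - 1)" by simp
  qed
  also have "\<dots> = (\<Sum>y\<in>(\<lambda>y. y - {b}) ` S. mut_prob n x y) / (real n - 1)"
    using inj by (simp add: sum.reindex sum_divide_distrib)
  also have "\<dots> \<le> (\<Sum>y\<in>{y\<in>X. b \<notin> y}. mut_prob n x y) / (real n - 1)"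
    using img fX n2 by (intro divide_right_mono sum_mono2 mut_prob_nonneg) auto
  finally show ?thesis unfolding S_def .
qed

lemma inj_sum:
  assumes n2: "n \<ge> 2" and xU: "x \<subseteq> {1..n}" and XU: "X \<subseteq> Pow {1..n}"
    and Z: "Z \<subseteq> {1..n} - x" and down: "\<And>y b. y \<in> X \<Longrightarrow> b \<in> Z \<Longrightarrow> b \<in> y \<Longrightarrow> y - {b} \<in> X"
    and h: "\<And>b. b \<in> Z \<Longrightarrow> h b \<ge> 0"
  shows "(\<Sum>y\<in>X. mut_prob n x y * sum h (y \<inter> Z)) \<le> (\<Sum>y\<in>X. mut_prob n x y * sum h (Z - y)) / (real n - 1)"
proof -
  have fX: "finite X" using XU by (rule finite_subset) auto
  have fZ: "finite Z" using Z by (rule finite_subset) auto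
  have "(\<Sum>y\<in>X. mut_prob n x y * sum h (y \<inter> Z)) = (\<Sum>y\<in>X. \<Sum>b\<in>Z. mut_prob n x y * (if b \<in> y then h b else 0))"
  proof (rule sum.cong[OF refl])
    fix y
    have "sum h (y \<inter> Z) = (\<Sum>b\<in>Z. if b \<in> y then h b else 0)"
      using fZ by (simp add: Int_commute sum.inter_restrict)
    then show "mut_prob n x y * sum h (y \<inter> Z) = (\<Sum>b\<in>Z. mut_prob n x y * (if b \<in> y then h b else 0))"
      by (simp add: sum_distrib_left)
  qed
  also have "\<dots> = (\<Sum>b\<in>Z. h b * (\<Sum>y\<in>{y\<in>X. b \<in> y}. mut_prob n x y))"
    by (subst sum.swap) (simp add: sum.inter_filter[OF fX, symmetric] sum_distrib_left sum.inter_restrict[OF fX] mult.commute if_distrib cong: if_cong)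
  also have "\<dots> \<le> (\<Sum>b\<in>Z. h b * ((\<Sum>y\<in>{y\<in>X. b \<notin> y}. mut_prob n x y) / (real n - 1)))"
    by (intro sum_mono mult_left_mono inj_b[OF n2 xU XU Z down] h)
  also have "\<dots> = (\<Sum>y\<in>X. mut_prob n x y * sum h (Z - y)) / (real n - 1)"
  proof -
    have "(\<Sum>b\<in>Z. h b * ((\<Sum>y\<in>{y\<in>X. b \<notin> y}. mut_prob n x y) / (real n - 1)))
       = (\<Sum>b\<in>Z. \<Sum>y\<in>X. mut_prob n x y * (if b \<notin> y then h b else 0)) / (real n - 1)"
      by (simp add: sum_divide_distrib sum.inter_filter[OF fX, symmetric] sum_distrib_left sum.inter_restrict[OF fX] mult.commute if_distrib cong: if_cong)
    also have "\<dots> = (\<Sum>y\<in>X. \<Sum>b\<in>Z. mut_prob n x y * (if b \<notin> y then h b else 0)) / (real n - 1)"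
      by (subst sum.swap) simp
    also have "\<dots> = (\<Sum>y\<in>X. mut_prob n x y * sum h (Z - y)) / (real n - 1)"
    proof -
      have "\<And>y. sum h (Z - y) = (\<Sum>b\<in>Z. if b \<notin> y then h b else 0)"
        using fZ by (simp add: Diff_eq sum.inter_restrict)
      then show ?thesis by (simp add: sum_distrib_left)
    qed
    finally show ?thesis .
  qed
  finally show ?thesis .
qed



lemma key_ineq:
  assumes a1: "1 \<le> a" and an: "a \<le> n" and n2: "n \<ge> 2"
  shows "(\<Sum>b\<in>{1..<a}. 1 + real b / real n) / (real n - 1)
       + (\<Sum>b\<in>{a<..n}. (real b - real a) / real n) / (real n - 1) \<le> 3/4 * (1 + real a / real n)"
proof -
  define A where "A = real a"
  define N where "N = real n"
  have A1: "A \<ge> 1" and AN: "A \<le> N" and N2: "N \<ge> 2" using assms unfolding A_def N_def by auto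
  have s1: "(\<Sum>b\<in>{1..<a}. 1 + real b / real n) = (A - 1) + (A - 1) * A / (2 * N)"
  proof -
    have "(\<Sum>b\<in>{1..<a}. 1 + real b / real n) = real (card {1..<a}) + (\<Sum>b\<in>{1..<a}. real b) / real n"
      by (simp add: sum.distrib sum_divide_distrib)
    also have "\<dots> = (A - 1) + (A - 1) * A / (2 * N)"
      unfolding sum_lo using a1 unfolding A_def N_def by (simp add: of_nat_diff)
    finally show ?thesis .
  qed
  have s2: "(\<Sum>b\<in>{a<..n}. (real b - real a) / real n) = (N - A) * (N - A + 1) / (2 * N)"
  proof -
    have "(\<Sum>b\<in>{a<..n}. (real b - real a) / real n) = (\<Sum>b\<in>{a<..n}. real b - real a) / real n"
      by (simp add: sum_divide_distrib)
    also have "\<dots> = (N - A) * (N - A + 1) / (2 * N)"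
      unfolding sum_hi[OF an] using an unfolding A_def N_def by (simp add: of_nat_diff)
    finally show ?thesis .
  qed
  have poly: "(N - A) * (N + 4 * A - 1) \<ge> 0" using A1 AN by (intro mult_nonneg_nonneg) auto
  have N1: "N - 1 > 0" and N0: "N > 0" using N2 by auto
  have goal: "((A - 1) + (A - 1) * A / (2 * N)) / (N - 1) + (N - A) * (N - A + 1) / (2 * N) / (N - 1)
      \<le> 3/4 * (1 + A / N)"
  proof -
    define X where "X = (A - 1) + (A - 1) * A / (2 * N) + (N - A) * (N - A + 1) / (2 * N)"
    have e1: "X = (2 * N * (A - 1) + (A - 1) * A + (N - A) * (N - A + 1)) / (2 * N)"
      unfolding X_def using N0 by (simp add: field_simps)
    have e2: "3/4 * (1 + A / N) * (N - 1) = (3 * (N + A) * (N - 1) / 2) / (2 * N)"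
      using N0 by (simp add: field_simps)
    have "2 * N * (A - 1) + (A - 1) * A + (N - A) * (N - A + 1) \<le> 3 * (N + A) * (N - 1) / 2"
      using poly by (simp add: algebra_simps)
    then have "X \<le> 3/4 * (1 + A / N) * (N - 1)" unfolding e1 e2 using N0 by (intro divide_right_mono) auto
    then have "X / (N - 1) \<le> 3/4 * (1 + A / N)" using N1 by (simp add: pos_divide_le_eq)
    moreover have "X / (N - 1) = ((A - 1) + (A - 1) * A / (2 * N)) / (N - 1) + (N - A) * (N - A + 1) / (2 * N) / (N - 1)"
      unfolding X_def by (simp add: add_divide_distrib)
    ultimately show ?thesis by simp
  qed
  show ?thesis using goal unfolding s1 s2 A_def N_def .
qed



context
  fixes n :: nat and w :: "nat \<Rightarrow> real" and x :: "nat set"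
  assumes n2: "n \<ge> 2"
    and wpos: "\<And>i. i \<in> {1..n} \<Longrightarrow> 0 < w i"
    and wmono: "\<And>i j. 1 \<le> i \<Longrightarrow> i \<le> j \<Longrightarrow> j \<le> n \<Longrightarrow> w i \<le> w j"
    and xU: "x \<subseteq> {1..n}"
begin

lemma fx: "finite x" using xU by (rule finite_subset) auto

lemma lin_diff: "y \<subseteq> {1..n} \<Longrightarrow> lin_fun w y - lin_fun w x = sum w (y - x) - sum w (x - y)"
  unfolding lin_fun_def by (rule sum_diff_sets[OF fx]) (auto intro: finite_subset)

lemma g_diff: "y \<subseteq> {1..n} \<Longrightarrow> g_fun n x - g_fun n y = g_fun n (x - y) - g_fun n (y - x)"
proof -
  assume "y \<subseteq> {1..n}"
  then have "finite y" by (rule finite_subset) auto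
  then show ?thesis unfolding g_fun_def using sum_diff_sets[OF fx, of y "\<lambda>i. 1 + real i / real n"]
    by linarith
qed

lemma pos_empty: "S \<subseteq> {1..n} \<Longrightarrow> sum w S \<le> 0 \<Longrightarrow> S = {}"
proof (rule ccontr)
  assume S: "S \<subseteq> {1..n}" "sum w S \<le> 0" "S \<noteq> {}"
  have "finite S" using S(1) by (rule finite_subset) auto
  then have "sum w S > 0" using S wpos by (intro sum_pos) auto
  then show False using S by simp
qed

lemma delta_restrict:
  "(\<Sum>y\<in>S. mut_prob n x y * delta n w x y) =
   (\<Sum>y\<in>{y\<in>S. lin_fun w y \<le> lin_fun w x}. mut_prob n x y * (g_fun n x - g_fun n y))"
  if "finite S" for S
  unfolding delta_def using that by (simp add: sum.inter_filter[symmetric] sum.inter_restrict if_distrib cong: if_cong)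

lemma class0: "y \<in> Pow {1..n} \<Longrightarrow> card (x - y) = 0 \<Longrightarrow> delta n w x y = 0"
proof -
  assume y: "y \<in> Pow {1..n}" and c: "card (x - y) = 0"
  have e: "x - y = {}" using c fx by simp
  show ?thesis
  proof (cases "lin_fun w y \<le> lin_fun w x")
    case True
    then have "sum w (y - x) \<le> 0" using lin_diff[of y] y e by simp
    then have "y - x = {}" using y by (intro pos_empty) auto
    then have "y = x" using e by auto
    then show ?thesis unfolding delta_def by simp
  next
    case False then show ?thesis unfolding delta_def by simp
  qed
qed

lemma down_lemma:
  assumes "y \<subseteq> {1..n}" "b \<in> {1..n} - x" "lin_fun w y \<le> lin_fun w x"
  shows "y - {b} \<subseteq> {1..n}" "x - (y - {b}) = x - y" "lin_fun w (y - {b}) \<le> lin_fun w x"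
    "(y - {b}) - x = (y - x) - {b}"
proof -
  show "y - {b} \<subseteq> {1..n}" "x - (y - {b}) = x - y" "(y - {b}) - x = (y - x) - {b}" using assms by auto
  have fy: "finite y" using assms(1) by (rule finite_subset) auto
  have "lin_fun w (y - {b}) \<le> lin_fun w y" unfolding lin_fun_def
    using fy assms(1) wpos by (intro sum_mono2) (auto, meson less_imp_le subsetD atLeastAtMost_iff)
  then show "lin_fun w (y - {b}) \<le> lin_fun w x" using assms(3) by simp
qed

lemma gf_bounds: "i \<in> {1..n} \<Longrightarrow> 1 \<le> 1 + real i / real n \<and> 1 + real i / real n \<le> 2"
  using n2 by (auto simp: field_simps)

lemma class2: "(\<Sum>y\<in>{y\<in>Pow {1..n}. card (x - y) \<ge> 2}. mut_prob n x y * delta n w x y) \<ge> 0"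
proof -
  define gf where "gf = (\<lambda>i::nat. 1 + real i / real n)"
  define C2 where "C2 = {y\<in>Pow {1..n}. card (x - y) \<ge> 2}"
  define X2 where "X2 = {y\<in>C2. lin_fun w y \<le> lin_fun w x}"
  define Z where "Z = {1..n} - x"
  have fC2: "finite C2" unfolding C2_def by simp
  have X2U: "X2 \<subseteq> Pow {1..n}" unfolding X2_def C2_def by auto
  have fX2: "finite X2" using X2U by (rule finite_subset) simp
  have n1: "real n - 1 > 0" using n2 by simp
  have "(\<Sum>y\<in>C2. mut_prob n x y * delta n w x y) = (\<Sum>y\<in>X2. mut_prob n x y * (g_fun n x - g_fun n y))"
    unfolding X2_def by (rule delta_restrict[OF fC2])
  also have "\<dots> = (\<Sum>y\<in>X2. mut_prob n x y * g_fun n (x - y)) - (\<Sum>y\<in>X2. mut_prob n x y * sum gf (y \<inter> Z))"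
  proof -
    have "\<And>y. y \<in> X2 \<Longrightarrow> g_fun n x - g_fun n y = g_fun n (x - y) - sum gf (y \<inter> Z)"
    proof -
      fix y assume "y \<in> X2"
      then have yU: "y \<subseteq> {1..n}" using X2U by auto
      then have "y - x = y \<inter> Z" unfolding Z_def by auto
      then show "g_fun n x - g_fun n y = g_fun n (x - y) - sum gf (y \<inter> Z)"
        using g_diff[OF yU] unfolding g_fun_def gf_def by simp
    qed
    then show ?thesis by (simp add: sum_subtractf[symmetric] right_diff_distrib)
  qed
  finally have eq: "(\<Sum>y\<in>C2. mut_prob n x y * delta n w x y) = (\<Sum>y\<in>X2. mut_prob n x y * g_fun n (x - y)) - (\<Sum>y\<in>X2. mut_prob n x y * sum gf (y \<inter> Z))" .
  have inj: "(\<Sum>y\<in>X2. mut_prob n x y * sum gf (y \<inter> Z)) \<le> (\<Sum>y\<in>X2. mut_prob n x y * sum gf (Z - y)) / (real n - 1)"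
  proof (rule inj_sum[OF n2 xU X2U])
    show "Z \<subseteq> {1..n} - x" unfolding Z_def by simp
    show "\<And>b. b \<in> Z \<Longrightarrow> 0 \<le> gf b" unfolding gf_def by simp
    fix y b assume y: "y \<in> X2" "b \<in> Z" "b \<in> y"
    then have yU: "y \<subseteq> {1..n}" and acc: "lin_fun w y \<le> lin_fun w x" and c: "card (x - y) \<ge> 2"
      using X2U unfolding X2_def C2_def by auto
    note d = down_lemma[OF yU _ acc, of b]
    show "y - {b} \<in> X2" using d y(2) c unfolding X2_def C2_def Z_def by auto
  qed
  have pw: "(\<Sum>y\<in>X2. mut_prob n x y * sum gf (Z - y)) / (real n - 1) \<le> (\<Sum>y\<in>X2. mut_prob n x y * g_fun n (x - y))"
    unfolding sum_divide_distrib
  proof (rule sum_mono)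
    fix y assume y: "y \<in> X2"
    then have yU: "y \<subseteq> {1..n}" and c: "card (x - y) \<ge> 2"
      using X2U unfolding X2_def C2_def by auto
    have fZ: "finite (Z - y)" unfolding Z_def by simp
    have fxy: "finite (x - y)" using fx by simp
    have S: "sum gf (Z - y) \<le> real (card (Z - y)) * 2"
      using gf_bounds unfolding gf_def Z_def by (intro sum_bounded_above) auto
    have G: "g_fun n (x - y) \<ge> real (card (x - y))"
    proof -
      have "real (card (x - y)) = (\<Sum>i\<in>x - y. 1)" by simp
      also have "\<dots> \<le> g_fun n (x - y)" unfolding g_fun_def
        using fxy by (intro sum_mono) (simp add: field_simps)
      finally show ?thesis .
    qed
    have "card ((Z - y) \<union> (x - y)) \<le> card {1..n}"
      using xU unfolding Z_def by (intro card_mono) auto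
    moreover have "card ((Z - y) \<union> (x - y)) = card (Z - y) + card (x - y)"
      using fZ fxy unfolding Z_def by (intro card_Un_disjoint) auto
    ultimately have cc: "real (card (Z - y)) + real (card (x - y)) \<le> real n" by simp
    have c2: "real (card (x - y)) \<ge> 2" using c by simp
    have "sum gf (Z - y) \<le> (real n - 1) * g_fun n (x - y)"
    proof -
      have "(real n - 1) * g_fun n (x - y) \<ge> (real n - 1) * real (card (x - y))"
        using G n1 by (intro mult_left_mono) auto
      moreover have "(real n - 1) * real (card (x - y)) \<ge> real (card (Z - y)) * 2"
      proof -
        have h1: "(real n + 1) * real (card (x - y)) \<ge> (real n + 1) * 2"
          using c2 by (intro mult_left_mono) auto
        then have "real n * real (card (x - y)) + real (card (x - y)) \<ge> 2 * real n + 2"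
          by (simp add: algebra_simps)
        then show ?thesis using cc by (simp add: left_diff_distrib)
      qed
      ultimately show ?thesis using S by linarith
    qed
    then have "sum gf (Z - y) / (real n - 1) \<le> g_fun n (x - y)" using n1 by (simp add: field_simps)
    moreover have "mut_prob n x y \<ge> 0" using n2 by (intro mut_prob_nonneg) auto
    ultimately show "mut_prob n x y * sum gf (Z - y) / (real n - 1) \<le> mut_prob n x y * g_fun n (x - y)"
      by (metis mult_left_mono times_divide_eq_right)
  qed
  show ?thesis using eq inj pw unfolding C2_def by linarith
qed

lemma mp_card: "y \<subseteq> {1..n} \<Longrightarrow> card ((x - y) \<union> (y - x)) = k \<Longrightarrow>
    mut_prob n x y = (1 / real n) ^ k * (1 - 1 / real n) ^ (n - k)"
  unfolding mut_prob_def by simp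

lemma class1_lo:
  assumes a: "a \<in> x"
  shows "(\<Sum>y\<in>{y\<in>Pow {1..n}. x - y = {a} \<and> y - x \<subseteq> {..<a}}. mut_prob n x y * delta n w x y)
    \<ge> (1 / real n) * (1 - 1 / real n) ^ (n - 1) *
        ((1 + real a / real n) - (\<Sum>b\<in>{1..<a}. 1 + real b / real n) / (real n - 1))"
proof -
  define gf where "gf = (\<lambda>i::nat. 1 + real i / real n)"
  define Y where "Y = {y\<in>Pow {1..n}. x - y = {a} \<and> y - x \<subseteq> {..<a}}"
  define X where "X = {y\<in>Y. lin_fun w y \<le> lin_fun w x}"
  define Z where "Z = ({1..n} - x) \<inter> {..<a}"
  define \<sigma> where "\<sigma> = (\<Sum>b\<in>{1..<a}. gf b) / (real n - 1)"
  have fY: "finite Y" unfolding Y_def by simp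
  have XU: "X \<subseteq> Pow {1..n}" unfolding X_def Y_def by auto
  have fX: "finite X" using XU by (rule finite_subset) simp
  have n1: "real n - 1 > 0" using n2 by simp
  have aU: "a \<in> {1..n}" using a xU by auto
  have "(\<Sum>y\<in>Y. mut_prob n x y * delta n w x y) = (\<Sum>y\<in>X. mut_prob n x y * (g_fun n x - g_fun n y))"
    unfolding X_def by (rule delta_restrict[OF fY])
  also have "\<dots> = (\<Sum>y\<in>X. mut_prob n x y * gf a) - (\<Sum>y\<in>X. mut_prob n x y * sum gf (y \<inter> Z))"
  proof -
    have "\<And>y. y \<in> X \<Longrightarrow> g_fun n x - g_fun n y = gf a - sum gf (y \<inter> Z)"
    proof -
      fix y assume "y \<in> X"
      then have yU: "y \<subseteq> {1..n}" and xy: "x - y = {a}" and lo: "y - x \<subseteq> {..<a}"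
        unfolding X_def Y_def by auto
      then have "y - x = y \<inter> Z" unfolding Z_def by auto
      then show "g_fun n x - g_fun n y = gf a - sum gf (y \<inter> Z)"
        using g_diff[OF yU] xy unfolding g_fun_def gf_def by simp
    qed
    then show ?thesis by (simp add: sum_subtractf[symmetric] right_diff_distrib)
  qed
  finally have eq: "(\<Sum>y\<in>Y. mut_prob n x y * delta n w x y) = (\<Sum>y\<in>X. mut_prob n x y * gf a) - (\<Sum>y\<in>X. mut_prob n x y * sum gf (y \<inter> Z))" .
  have inj: "(\<Sum>y\<in>X. mut_prob n x y * sum gf (y \<inter> Z)) \<le> (\<Sum>y\<in>X. mut_prob n x y * sum gf (Z - y)) / (real n - 1)"
  proof (rule inj_sum[OF n2 xU XU])
    show "Z \<subseteq> {1..n} - x" unfolding Z_def by auto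
    show "\<And>b. b \<in> Z \<Longrightarrow> 0 \<le> gf b" unfolding gf_def by simp
    fix y b assume y: "y \<in> X" "b \<in> Z" "b \<in> y"
    then have yU: "y \<subseteq> {1..n}" and acc: "lin_fun w y \<le> lin_fun w x" and c: "x - y = {a}" "y - x \<subseteq> {..<a}"
      using XU unfolding X_def Y_def by auto
    have b': "b \<in> {1..n} - x" using y(2) unfolding Z_def by auto
    note d = down_lemma[OF yU b' acc]
    have "(y - {b}) - x \<subseteq> {..<a}" using c(2) by auto
    then show "y - {b} \<in> X" unfolding X_def Y_def using d(1,2,3) c(1) by simp
  qed
  have sm: "(\<Sum>y\<in>X. mut_prob n x y * sum gf (Z - y)) / (real n - 1) \<le> (\<Sum>y\<in>X. mut_prob n x y * \<sigma>)"
    unfolding sum_divide_distrib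
  proof (rule sum_mono)
    fix y assume "y \<in> X"
    have "sum gf (Z - y) \<le> sum gf {1..<a}"
      unfolding gf_def Z_def by (intro sum_mono2) auto
    then have "sum gf (Z - y) / (real n - 1) \<le> \<sigma>" unfolding \<sigma>_def using n1 by (intro divide_right_mono) auto
    moreover have "mut_prob n x y \<ge> 0" using n2 by (intro mut_prob_nonneg) auto
    ultimately show "mut_prob n x y * sum gf (Z - y) / (real n - 1) \<le> mut_prob n x y * \<sigma>"
      by (metis mult_left_mono times_divide_eq_right)
  qed
  have sig: "\<sigma> \<le> gf a"
  proof -
    have "(\<Sum>b\<in>{a<..n}. (real b - real a) / real n) \<ge> 0" by (intro sum_nonneg) auto
    then have "(\<Sum>b\<in>{a<..n}. (real b - real a) / real n) / (real n - 1) \<ge> 0" using n1 by simp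
    moreover have "0 \<le> gf a" unfolding gf_def by simp
    then have "3/4 * gf a \<le> gf a" by linarith
    moreover have "(\<Sum>b\<in>{1..<a}. 1 + real b / real n) / (real n - 1)
       + (\<Sum>b\<in>{a<..n}. (real b - real a) / real n) / (real n - 1) \<le> 3/4 * (1 + real a / real n)"
      using aU n2 by (intro key_ineq) auto
    ultimately show ?thesis unfolding \<sigma>_def gf_def by linarith
  qed
  define y0 where "y0 = x - {a}"
  have y0X: "y0 \<in> X"
  proof -
    have "lin_fun w x = lin_fun w y0 + w a" unfolding lin_fun_def y0_def using fx a
      by (simp add: sum.remove)
    then have "lin_fun w y0 \<le> lin_fun w x" using wpos[OF aU] by simp
    then show ?thesis unfolding X_def Y_def y0_def using xU a by auto
  qed
  have Py0: "mut_prob n x y0 = (1 / real n) * (1 - 1 / real n) ^ (n - 1)"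
  proof -
    have "(x - y0) \<union> (y0 - x) = {a}" unfolding y0_def using a by auto
    then show ?thesis using mp_card[of y0 1] xU unfolding y0_def by auto
  qed
  have "(\<Sum>y\<in>X. mut_prob n x y * (gf a - \<sigma>)) \<ge> mut_prob n x y0 * (gf a - \<sigma>)"
    using y0X fX sig n2 by (intro member_le_sum mult_nonneg_nonneg mut_prob_nonneg) auto
  moreover have "(\<Sum>y\<in>X. mut_prob n x y * (gf a - \<sigma>)) = (\<Sum>y\<in>X. mut_prob n x y * gf a) - (\<Sum>y\<in>X. mut_prob n x y * \<sigma>)"
    by (simp add: sum_subtractf[symmetric] right_diff_distrib)
  ultimately have "(\<Sum>y\<in>Y. mut_prob n x y * delta n w x y) \<ge> mut_prob n x y0 * (gf a - \<sigma>)"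
    using eq inj sm by linarith
  then show ?thesis unfolding Py0 Y_def \<sigma>_def gf_def .
qed

lemma class1_hi:
  assumes a: "a \<in> x"
  shows "(\<Sum>y\<in>{y\<in>Pow {1..n}. x - y = {a} \<and> \<not> (y - x \<subseteq> {..<a})}. mut_prob n x y * delta n w x y)
    \<ge> - ((1 / real n) ^ 2 * (1 - 1 / real n) ^ (n - 2) * (\<Sum>b\<in>{a<..n}. (real b - real a) / real n))"
proof -
  define Y where "Y = {y\<in>Pow {1..n}. x - y = {a} \<and> \<not> (y - x \<subseteq> {..<a})}"
  define Zh where "Zh = ({1..n} - x) \<inter> {a<..}"
  define ins where "ins = (\<lambda>b. insert b (x - {a}))"
  define p2 where "p2 = (1 / real n) ^ 2 * (1 - 1 / real n) ^ (n - 2)"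
  have aU: "a \<in> {1..n}" using a xU by auto
  have p2: "p2 \<ge> 0" unfolding p2_def using n2 by simp
  have fY: "finite Y" unfolding Y_def by simp
  have TY: "ins ` Zh \<subseteq> Y" unfolding Y_def Zh_def ins_def using xU a by auto
  have zero: "\<forall>y\<in>Y - ins ` Zh. mut_prob n x y * delta n w x y = 0"
  proof
    fix y assume y: "y \<in> Y - ins ` Zh"
    then have yU: "y \<subseteq> {1..n}" and xy: "x - y = {a}" and nlo: "\<not> (y - x \<subseteq> {..<a})"
      and nT: "y \<notin> ins ` Zh" unfolding Y_def by auto
    show "mut_prob n x y * delta n w x y = 0"
    proof (cases "lin_fun w y \<le> lin_fun w x")
      case False then show ?thesis unfolding delta_def by simp
    next
      case True
      from nlo obtain b where b: "b \<in> y - x" "\<not> b < a" by auto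
      have ay: "a \<notin> y" using xy by auto
      have bU: "b \<in> {1..n}" using b yU by auto
      have ab: "a < b" using b ay by (cases "a = b") auto
      have wab: "w a \<le> w b" using aU bU ab by (intro wmono) auto
      have fyx: "finite (y - x)" using yU by (meson finite_Diff finite_atLeastAtMost finite_subset)
      have "sum w (y - x) - w a \<le> 0" using lin_diff[OF yU] True xy by simp
      moreover have "sum w (y - x) = w b + sum w ((y - x) - {b})" using b fyx by (simp add: sum.remove)
      ultimately have "sum w ((y - x) - {b}) \<le> 0" using wab by linarith
      then have "(y - x) - {b} = {}" using yU by (intro pos_empty) auto
      then have yx: "y - x = {b}" using b by auto
      have "y = insert b (x - {a})"
      proof -
        have "y = (x \<inter> y) \<union> (y - x)" by auto
        also have "x \<inter> y = x - {a}" using xy by auto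
        finally show ?thesis using yx by auto
      qed
      moreover have "b \<in> Zh" unfolding Zh_def using b bU ab by auto
      ultimately have "y \<in> ins ` Zh" unfolding ins_def by auto
      then show ?thesis using nT by simp
    qed
  qed
  have "(\<Sum>y\<in>Y. mut_prob n x y * delta n w x y) = (\<Sum>y\<in>ins ` Zh. mut_prob n x y * delta n w x y)"
    using fY TY zero by (intro sum.mono_neutral_right) auto
  also have "\<dots> = (\<Sum>b\<in>Zh. mut_prob n x (ins b) * delta n w x (ins b))"
  proof (rule sum.reindex[unfolded comp_def])
    show "inj_on ins Zh" unfolding inj_on_def ins_def Zh_def by auto
  qed
  also have "\<dots> \<ge> (\<Sum>b\<in>Zh. p2 * ((real a - real b) / real n))"
  proof (rule sum_mono)
    fix b assume b: "b \<in> Zh"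
    then have bU: "b \<in> {1..n}" and bx: "b \<notin> x" and ab: "a < b" unfolding Zh_def by auto
    have insU: "ins b \<subseteq> {1..n}" unfolding ins_def using bU xU by auto
    have d1: "x - ins b = {a}" "ins b - x = {b}" unfolding ins_def using a bx ab by auto
    have "(x - ins b) \<union> (ins b - x) = {a, b}" using d1 by auto
    then have "card ((x - ins b) \<union> (ins b - x)) = 2" using ab by simp
    then have P: "mut_prob n x (ins b) = p2" unfolding p2_def using mp_card[OF insU] by simp
    have "g_fun n x - g_fun n (ins b) = (1 + real a / real n) - (1 + real b / real n)"
      using g_diff[OF insU] d1 unfolding g_fun_def by simp
    also have "\<dots> = (real a - real b) / real n" by (simp add: diff_divide_distrib)
    finally have g: "g_fun n x - g_fun n (ins b) = (real a - real b) / real n" .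
    have "(real a - real b) / real n \<le> 0" using ab by (simp add: divide_nonpos_nonneg)
    then have "delta n w x (ins b) \<ge> (real a - real b) / real n" unfolding delta_def g by auto
    then show "p2 * ((real a - real b) / real n) \<le> mut_prob n x (ins b) * delta n w x (ins b)"
      unfolding P using p2 by (rule mult_left_mono)
  qed
  finally have h0: "(\<Sum>y\<in>Y. mut_prob n x y * delta n w x y) \<ge> (\<Sum>b\<in>Zh. p2 * ((real a - real b) / real n))" .
  have "(\<Sum>b\<in>Zh. p2 * ((real a - real b) / real n)) = (\<Sum>b\<in>Zh. - (p2 * ((real b - real a) / real n)))"
    by (intro sum.cong refl) (metis minus_diff_eq minus_divide_left mult_minus_right)
  also have "\<dots> = - (p2 * (\<Sum>b\<in>Zh. (real b - real a) / real n))"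
    by (simp add: sum_negf sum_distrib_left)
  finally have h1: "(\<Sum>y\<in>Y. mut_prob n x y * delta n w x y) \<ge> - (p2 * (\<Sum>b\<in>Zh. (real b - real a) / real n))"
    using h0 by simp
  have "(\<Sum>b\<in>Zh. (real b - real a) / real n) \<le> (\<Sum>b\<in>{a<..n}. (real b - real a) / real n)"
    unfolding Zh_def by (intro sum_mono2) auto
  then have "p2 * (\<Sum>b\<in>Zh. (real b - real a) / real n) \<le> p2 * (\<Sum>b\<in>{a<..n}. (real b - real a) / real n)"
    using p2 by (rule mult_left_mono)
  then show ?thesis using h1 unfolding Y_def p2_def by linarith
qed

lemma class1:
  assumes a: "a \<in> x"
  shows "(\<Sum>y\<in>{y\<in>Pow {1..n}. x - y = {a}}. mut_prob n x y * delta n w x y)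
    \<ge> (1 / real n) * (1 - 1 / real n) ^ (n - 1) * (1 + real a / real n) / 4"
proof -
  define A1 where "A1 = {y\<in>Pow {1..n}. x - y = {a} \<and> y - x \<subseteq> {..<a}}"
  define A2 where "A2 = {y\<in>Pow {1..n}. x - y = {a} \<and> \<not> (y - x \<subseteq> {..<a})}"
  define p1 where "p1 = (1 / real n) * (1 - 1 / real n) ^ (n - 1)"
  define p2 where "p2 = (1 / real n) ^ 2 * (1 - 1 / real n) ^ (n - 2)"
  define \<sigma> where "\<sigma> = (\<Sum>b\<in>{1..<a}. 1 + real b / real n) / (real n - 1)"
  define S where "S = (\<Sum>b\<in>{a<..n}. (real b - real a) / real n)"
  have aU: "a \<in> {1..n}" using a xU by auto
  have n1: "real n - 1 > 0" using n2 by simp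
  have split: "{y\<in>Pow {1..n}. x - y = {a}} = A1 \<union> A2" unfolding A1_def A2_def by auto
  have "(\<Sum>y\<in>{y\<in>Pow {1..n}. x - y = {a}}. mut_prob n x y * delta n w x y)
      = (\<Sum>y\<in>A1. mut_prob n x y * delta n w x y) + (\<Sum>y\<in>A2. mut_prob n x y * delta n w x y)"
    unfolding split by (rule sum.union_disjoint) (auto simp: A1_def A2_def)
  moreover have "(\<Sum>y\<in>A1. mut_prob n x y * delta n w x y) \<ge> p1 * ((1 + real a / real n) - \<sigma>)"
    unfolding A1_def p1_def \<sigma>_def by (rule class1_lo[OF a])
  moreover have "(\<Sum>y\<in>A2. mut_prob n x y * delta n w x y) \<ge> - (p2 * S)"
    unfolding A2_def p2_def S_def by (rule class1_hi[OF a])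
  moreover have "p2 = p1 / (real n - 1)"
  proof -
    have nn: "n - 1 = Suc (n - 2)" using n2 by simp
    have "p1 = (1 / real n) * (1 - 1 / real n) * (1 - 1 / real n) ^ (n - 2)"
      unfolding p1_def nn by simp
    also have "(1 - 1 / real n) = (real n - 1) / real n" using n2 by (simp add: field_simps)
    finally show ?thesis unfolding p2_def using n1 by (simp add: field_simps power2_eq_square)
  qed
  moreover have "\<sigma> + S / (real n - 1) \<le> 3/4 * (1 + real a / real n)"
    unfolding \<sigma>_def S_def using aU n2 by (intro key_ineq) auto
  moreover have "p1 \<ge> 0" unfolding p1_def using n2 by simp
  ultimately show ?thesis
  proof -
    assume eq: "(\<Sum>y\<in>{y\<in>Pow {1..n}. x - y = {a}}. mut_prob n x y * delta n w x y)
      = (\<Sum>y\<in>A1. mut_prob n x y * delta n w x y) + (\<Sum>y\<in>A2. mut_prob n x y * delta n w x y)"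
      and l: "(\<Sum>y\<in>A1. mut_prob n x y * delta n w x y) \<ge> p1 * ((1 + real a / real n) - \<sigma>)"
      and h: "(\<Sum>y\<in>A2. mut_prob n x y * delta n w x y) \<ge> - (p2 * S)"
      and p: "p2 = p1 / (real n - 1)" and k: "\<sigma> + S / (real n - 1) \<le> 3/4 * (1 + real a / real n)"
      and p1: "p1 \<ge> 0"
    have "p1 * (1 + real a / real n) / 4 \<le> p1 * ((1 + real a / real n) - (\<sigma> + S / (real n - 1)))"
    proof -
      have "(1 + real a / real n) / 4 \<le> (1 + real a / real n) - (\<sigma> + S / (real n - 1))" proof -
        have gen: "\<And>G s :: real. s \<le> 3/4 * G \<Longrightarrow> G / 4 \<le> G - s" by linarith
        show ?thesis using gen[OF k] .
      qed
      then show ?thesis using p1 by (metis mult_left_mono times_divide_eq_right)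
    qed
    also have "\<dots> = p1 * ((1 + real a / real n) - \<sigma>) - p2 * S" unfolding p by (simp add: algebra_simps)
    finally show ?thesis using eq l h unfolding p1_def by linarith
  qed
qed

lemma main_n2: "expected_delta n w x \<ge> g_fun n x / (4 * exp 1 * real n)"
proof -
  define U where "U = Pow {1..n}"
  define f where "f = (\<lambda>y. mut_prob n x y * delta n w x y)"
  define C1 where "C1 = {y\<in>U. card (x - y) = 1}"
  define C0 where "C0 = {y\<in>U. card (x - y) = 0}"
  define C2 where "C2 = {y\<in>U. card (x - y) \<ge> 2}"
  define p1 where "p1 = (1 / real n) * (1 - 1 / real n) ^ (n - 1)"
  have fU: "finite U" unfolding U_def by simp
  have "sum f U = sum f (U - C1) + sum f C1"
    using fU by (intro sum.subset_diff) (auto simp: C1_def)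
  moreover have "sum f (U - C1) = sum f C2 + sum f C0"
  proof -
    have "U - C1 = C2 \<union> C0" unfolding C0_def C1_def C2_def by auto
    then show ?thesis using fU by (simp only:) (rule sum.union_disjoint, auto simp: C0_def C2_def)
  qed
  moreover have "sum f C0 = 0"
    unfolding f_def C0_def U_def by (intro sum.neutral) (auto simp: class0)
  moreover have "sum f C2 \<ge> 0" using class2 unfolding f_def C2_def U_def .
  moreover have "sum f C1 \<ge> p1 * g_fun n x / 4"
  proof -
    have C1eq: "C1 = (\<Union>a\<in>x. {y\<in>Pow {1..n}. x - y = {a}})"
      unfolding C1_def U_def by (auto simp: card_1_singleton_iff)
    have "sum f C1 = (\<Sum>a\<in>x. sum f {y\<in>Pow {1..n}. x - y = {a}})"
      unfolding C1eq using fx by (intro sum.UNION_disjoint) auto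
    also have "\<dots> \<ge> (\<Sum>a\<in>x. p1 * (1 + real a / real n) / 4)"
      unfolding f_def p1_def by (intro sum_mono class1)
    finally show ?thesis unfolding g_fun_def by (simp add: sum_distrib_left sum_divide_distrib)
  qed
  ultimately have E: "expected_delta n w x \<ge> p1 * g_fun n x / 4"
    unfolding expected_delta_def f_def U_def by linarith
  have g0: "g_fun n x \<ge> 0" unfolding g_fun_def by (intro sum_nonneg) simp
  have "p1 \<ge> (1 / real n) * exp (-1)" unfolding p1_def using exp_bound[OF n2] n2
    by (intro mult_left_mono) auto
  then have "p1 * g_fun n x / 4 \<ge> (1 / real n) * exp (-1) * g_fun n x / 4"
    using g0 by (intro divide_right_mono mult_right_mono) auto
  moreover have "(1 / real n) * exp (-1) * g_fun n x / 4 = g_fun n x / (4 * exp 1 * real n)"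
    by (simp add: exp_minus field_simps)
  ultimately show ?thesis using E by linarith
qed

end


lemma n1_case:
  assumes "\<And>i. i \<in> {1..1} \<Longrightarrow> 0 < w i" and "x \<subseteq> {1..1::nat}"
  shows "expected_delta 1 w x \<ge> g_fun 1 x / (4 * exp 1 * real 1)"
proof -
  have w1: "w 1 > 0" using assms(1) by simp
  have P: "Pow {1..1::nat} = {{}, {1}}" by (auto simp: Pow_def)
  have "x = {} \<or> x = {1}" using assms(2) by auto
  then show ?thesis
  proof
    assume x: "x = {}"
    show ?thesis unfolding expected_delta_def P x
      using w1 by (simp add: delta_def lin_fun_def g_fun_def mut_prob_def)
  next
    assume x: "x = {1}"
    have e: "exp (1::real) \<ge> 1" by simp
    have "expected_delta 1 w x = 2" unfolding expected_delta_def P x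
      using w1 by (simp add: delta_def lin_fun_def g_fun_def mut_prob_def)
    moreover have "g_fun 1 x = 2" unfolding x g_fun_def by simp
    moreover have "2 / (4 * exp 1 * real 1) \<le> (2::real)" proof -
      have "1 \<le> exp 1 * (4::real)" using e by linarith
      then show ?thesis by (simp add: field_simps)
    qed
    ultimately show ?thesis by simp
  qed
qed

theorem lemma3:
  fixes n :: nat and w :: "nat \<Rightarrow> real" and x :: "nat set"
  assumes "n \<ge> 1"
    and "\<And>i. i \<in> {1..n} \<Longrightarrow> 0 < w i"
    and "\<And>i j. 1 \<le> i \<Longrightarrow> i \<le> j \<Longrightarrow> j \<le> n \<Longrightarrow> w i \<le> w j"
    and "x \<subseteq> {1..n}"
  shows "expected_delta n w x \<ge> g_fun n x / (4 * exp 1 * real n)"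
proof (cases "n = 1")
  case True
  then show ?thesis using n1_case[of w x] assms(2,4) by simp
next
  case False
  then have "n \<ge> 2" using assms(1) by simp
  then show ?thesis using main_n2[of n w x] assms(2-4) by blast
qed

end
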